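(* Let $p,l$ be integers with $2\le l<p/2$ and $\gcd(p,l)=1$, and let $\vec r:\mathbb{Z}\to\mathbb{R}^2$ be a nondegenerate discrete planar curve with constant centroaffine curvatures $\kappa_k=1$ and $\bar\kappa_k=2\cos\frac{2l\pi}{p}$ for all $k$. Then $\vec r$ is closed with period $p$ and is not simple (it has self-intersections).
   Context: A discrete planar curve is a map $\vec r:\mathbb{Z}\to\mathbb{R}^2$; write $\vec r_k=\vec r(k)$ and $\vec t_k=\vec r_{k+1}-\vec r_k$. $[\vec a,\vec b]$ denotes the $2\times2$ determinant. The curve is nondegenerate if $[\vec t_{k-1},\vec t_k]\ne0$ for all $k$. Its first and second centroaffine curvatures are $\kappa_k=\frac{[\vec t_k,\vec t_{k+1}]}{[\vec t_{k-1},\vec t_k]}$, $\bar\kappa_k=\frac{[\vec t_{k-1},\vec t_{k+1}]}{[\vec t_{k-1},\vec t_k]}$. Closed with period $p$: $\vec r(k+p)=\vec r(k)$ for all $k$, $p$ minimal. Extend $\vec r$ to $\mathbb{R}$ by linear interpolation on each $[k,k+1]$; a closed curve is simple if this map is injective on $[k,k+p)$. *)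

theory Defs
  imports "HOL-Analysis.Analysis"
begin

definition det2 :: "real \<times> real \<Rightarrow> real \<times> real \<Rightarrow> real" where
  "det2 a b = fst a * snd b - snd a * fst b"

definition tang :: "(int \<Rightarrow> real \<times> real) \<Rightarrow> int \<Rightarrow> real \<times> real" where
  "tang r k = r (k + 1) - r k"

definition nondegenerate :: "(int \<Rightarrow> real \<times> real) \<Rightarrow> bool" where
  "nondegenerate r \<longleftrightarrow> (\<forall>k. det2 (tang r (k - 1)) (tang r k) \<noteq> 0)"

definition kappa :: "(int \<Rightarrow> real \<times> real) \<Rightarrow> int \<Rightarrow> real" where
  "kappa r k = det2 (tang r k) (tang r (k + 1)) / det2 (tang r (k - 1)) (tang r k)"

definition kappa_bar :: "(int \<Rightarrow> real \<times> real) \<Rightarrow> int \<Rightarrow> real" where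
  "kappa_bar r k = det2 (tang r (k - 1)) (tang r (k + 1)) / det2 (tang r (k - 1)) (tang r k)"

definition closed_with_period :: "(int \<Rightarrow> real \<times> real) \<Rightarrow> int \<Rightarrow> bool" where
  "closed_with_period r p \<longleftrightarrow> p > 0 \<and> (\<forall>k. r (k + p) = r k) \<and>
     (\<forall>q. 0 < q \<and> q < p \<longrightarrow> \<not> (\<forall>k. r (k + q) = r k))"

definition interp :: "(int \<Rightarrow> real \<times> real) \<Rightarrow> real \<Rightarrow> real \<times> real" where
  "interp r s = (1 - (s - of_int \<lfloor>s\<rfloor>)) *\<^sub>R r \<lfloor>s\<rfloor> + (s - of_int \<lfloor>s\<rfloor>) *\<^sub>R r (\<lfloor>s\<rfloor> + 1)"

definition simple_closed :: "(int \<Rightarrow> real \<times> real) \<Rightarrow> int \<Rightarrow> bool" where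
  "simple_closed r p \<longleftrightarrow> closed_with_period r p \<and>
     (\<forall>k::int. inj_on (interp r) {of_int k ..< of_int (k + p)})"

end

theory Submission
  imports Defs
begin

lemma trig_id:
  fixes x y z :: real
  shows "(cos (2*y) - cos (2*x)) * (sin (2*z) - sin (2*x)) - (sin (2*y) - sin (2*x)) * (cos (2*z) - cos (2*x))
     = 4 * sin (y - x) * sin (z - y) * sin (z - x)"
proof -
  have a: "sin x ^2 + cos x ^2 = 1" "sin y ^2 + cos y ^2 = 1" "sin z ^2 + cos z ^2 = 1" by simp_all
  show ?thesis unfolding sin_double cos_double sin_diff
    using a by algebra
qed

definition ff :: "real \<Rightarrow> real \<Rightarrow> real \<Rightarrow> real" where
  "ff a b c = (cos b - cos a) * (sin c - sin a) - (sin b - sin a) * (cos c - cos a)"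

lemma ff_pos:
  assumes "a < b" "b < c" "c < a + 2*pi"
  shows "0 < ff a b c"
proof -
  have "ff a b c = 4 * sin (b/2 - a/2) * sin (c/2 - b/2) * sin (c/2 - a/2)"
    using trig_id[of "b/2" "a/2" "c/2"] unfolding ff_def by simp
  moreover have "0 < sin (b/2 - a/2)" "0 < sin (c/2 - b/2)" "0 < sin (c/2 - a/2)"
    using assms by (auto intro!: sin_gt_zero)
  ultimately show ?thesis by simp
qed

lemma det2_lin:
  "det2 (a *\<^sub>R P + b *\<^sub>R Q) (a' *\<^sub>R P + b' *\<^sub>R Q) = (a*b' - b*a') * det2 P Q"
  by (simp add: det2_def algebra_simps)

lemma crossing:
  fixes A B C D :: "real \<times> real"
  defines "a \<equiv> det2 (C - A) (B - A)" and "b \<equiv> det2 (B - A) (D - A)"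
    and "c \<equiv> det2 (C - A) (D - A)" and "d \<equiv> det2 (B - C) (D - C)"
  assumes "0 < a*b" "0 < a*c" "0 < a*d"
  shows "\<exists>t s. 0 < t \<and> t < 1 \<and> 0 < s \<and> s < 1 \<and>
     (1 - t) *\<^sub>R A + t *\<^sub>R B = (1 - s) *\<^sub>R C + s *\<^sub>R D"
proof -
  have cd: "c + d = a + b" unfolding a_def b_def c_def d_def det2_def by (simp add: algebra_simps)
  have ab: "a + b \<noteq> 0" using assms(5) by (smt (verit) mult_pos_neg mult_neg_pos zero_less_mult_iff)
  have sg: "0 < c/(a+b)" "0 < d/(a+b)" "0 < a/(a+b)" "0 < b/(a+b)"
    using assms(5,6,7) cd by (auto simp: zero_less_divide_iff zero_less_mult_iff)
  define t where "t = c/(a+b)"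
  define s where "s = a/(a+b)"
  have t1: "1 - t = d/(a+b)" using cd ab unfolding t_def by (simp add: field_simps)
  have s1: "1 - s = b/(a+b)" using ab unfolding s_def by (simp add: field_simps)
  have eq: "(1 - t) *\<^sub>R A + t *\<^sub>R B = (1 - s) *\<^sub>R C + s *\<^sub>R D"
    unfolding t1 s1 unfolding t_def s_def using ab
    by (simp add: prod_eq_iff a_def b_def c_def d_def det2_def field_simps)
  show ?thesis
    apply (rule exI[of _ t], rule exI[of _ s])
    using sg t1 s1 eq unfolding t_def s_def by auto
qed


lemma basis_zero:
  fixes e f h :: "real \<times> real"
  assumes "det2 e f \<noteq> 0" "det2 f h = 0" "det2 e h = 0"
  shows "h = 0"
proof -
  have a: "fst h * det2 e f = fst e * (fst h * snd f) - fst f * (fst h * snd e)"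
    "snd h * det2 e f = snd f * (fst e * snd h) - snd e * (fst f * snd h)"
    by (simp_all add: det2_def algebra_simps)
  have b: "fst f * snd h = fst h * snd f" "fst e * snd h = fst h * snd e"
    using assms(2,3) unfolding det2_def by simp_all
  have "fst h * det2 e f = fst e * (fst f * snd h) - fst f * (fst e * snd h)"
    using a(1) b by simp
  then have 1: "fst h * det2 e f = 0" by (simp add: algebra_simps)
  have "snd h * det2 e f = snd f * (fst h * snd e) - snd e * (fst h * snd f)"
    using a(2) b by simp
  then have 2: "snd h * det2 e f = 0" by (simp add: algebra_simps)
  have "fst h * det2 e f = 0" "snd h * det2 e f = 0" using 1 2 by simp_all
  then show ?thesis using assms(1) by (simp add: prod_eq_iff)
qed

lemma tang_rec:
  assumes "nondegenerate r" "kappa r k = 1" "kappa_bar r k = cc"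
  shows "tang r (k+1) = cc *\<^sub>R tang r k - tang r (k-1)"
proof -
  let ?e = "tang r (k-1)" and ?f = "tang r k" and ?g = "tang r (k+1)"
  have D: "det2 ?e ?f \<noteq> 0" using assms(1) unfolding nondegenerate_def by auto
  have 1: "det2 ?f ?g = det2 ?e ?f" using assms(2) D unfolding kappa_def by (simp add: field_simps)
  have 2: "det2 ?e ?g = cc * det2 ?e ?f" using assms(3) D unfolding kappa_bar_def by (simp add: field_simps)
  have "?g - (cc *\<^sub>R ?f - ?e) = 0"
    apply (rule basis_zero[OF D])
    using 1 2 unfolding det2_def by (simp_all add: algebra_simps)
  then show ?thesis by simp
qed

lemma int_const:
  assumes "\<And>k::int. g (k+1) = g k"
  shows "g k = g 0"
  apply (induct k rule: int_induct[where k=0])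
  using assms by (auto simp: assms[of "_ - 1", simplified, symmetric])

lemma rec_unique:
  fixes v u :: "int \<Rightarrow> real \<times> real"
  assumes "\<And>k. v (k+1) = cc *\<^sub>R v k - v (k-1)" "\<And>k. u (k+1) = cc *\<^sub>R u k - u (k-1)"
    and "v 0 = u 0" "v 1 = u 1"
  shows "v k = u k"
proof -
  have "v k = u k \<and> v (k+1) = u (k+1)"
  proof (induct k rule: int_induct[where k=0])
    show "v 0 = u 0 \<and> v (0+1) = u (0+1)" using assms by simp
  next
    fix i :: int assume "v i = u i \<and> v (i+1) = u (i+1)"
    then show "v (i+1) = u (i+1) \<and> v (i+1+1) = u (i+1+1)"
      using assms(1)[of "i+1"] assms(2)[of "i+1"] by (simp add: add.assoc)
  next
    fix i :: int assume 3: "v i = u i \<and> v (i+1) = u (i+1)"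
    have "v (i-1) = cc *\<^sub>R v i - v (i+1)" using assms(1)[of i] by simp
    moreover have "u (i-1) = cc *\<^sub>R u i - u (i+1)" using assms(2)[of i] by simp
    ultimately show "v (i-1) = u (i-1) \<and> v (i-1+1) = u (i-1+1)" using 3 by simp
  qed
  then show ?thesis by simp
qed

lemma closed_form:
  fixes v :: "int \<Rightarrow> real \<times> real"
  assumes "\<And>k. v (k+1) = (2 * cos th) *\<^sub>R v k - v (k-1)" "sin th \<noteq> 0"
  shows "v k = cos (of_int k * th) *\<^sub>R v 0 + sin (of_int k * th) *\<^sub>R ((1 / sin th) *\<^sub>R (v 1 - cos th *\<^sub>R v 0))"
proof -
  define P where "P = v 0"
  define Q where "Q = (1 / sin th) *\<^sub>R (v 1 - cos th *\<^sub>R v 0)"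
  define u where "u k = cos (of_int k * th) *\<^sub>R P + sin (of_int k * th) *\<^sub>R Q" for k :: int
  have "v k = u k"
  proof (rule rec_unique[OF assms(1)])
    fix k :: int
    have c: "cos (of_int (k+1) * th) = 2 * cos th * cos (of_int k * th) - cos (of_int (k-1) * th)"
      by (simp add: distrib_right left_diff_distrib cos_add cos_diff)
    have s: "sin (of_int (k+1) * th) = 2 * cos th * sin (of_int k * th) - sin (of_int (k-1) * th)"
      by (simp add: distrib_right left_diff_distrib sin_add sin_diff)
    show "u (k+1) = (2 * cos th) *\<^sub>R u k - u (k-1)"
      unfolding u_def c s by (simp add: algebra_simps)
  next
    show "v 0 = u 0" unfolding u_def P_def by simp
  next
    show "v 1 = u 1" unfolding u_def P_def Q_def using assms(2) by (simp add: algebra_simps)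
  qed
  then show ?thesis unfolding u_def P_def Q_def .
qed

lemma interp_at:
  assumes "0 \<le> t" "t < 1"
  shows "interp r (of_int k + t) = (1 - t) *\<^sub>R r k + t *\<^sub>R r (k+1)"
proof -
  have "\<lfloor>of_int k + t\<rfloor> = k" using assms by (simp add: floor_unique)
  then show ?thesis unfolding interp_def by simp
qed


lemma U_period:
  fixes n :: int and y :: real
  shows "cos (y + 2 * pi * of_int n) = cos y" "sin (y + 2 * pi * of_int n) = sin y"
  by (simp_all add: cos_add sin_add)

theorem proposition3p13:
  fixes p l :: int and r :: "int \<Rightarrow> real \<times> real"
  assumes "2 \<le> l" and "2 * l < p" and "gcd p l = 1"
    and "nondegenerate r"
    and "\<forall>k. kappa r k = 1"
    and "\<forall>k. kappa_bar r k = 2 * cos (2 * of_int l * pi / of_int p)"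
  shows "closed_with_period r p \<and> \<not> simple_closed r p"
proof -
  define th where "th = 2 * of_int l * pi / of_int p"
  define cc where "cc = 2 * cos th"
  have p5: "5 \<le> p" using assms(1,2) by simp
  have pr: "(0::real) < of_int p" using p5 by simp
  have lr: "2 * real_of_int l < of_int p" using assms(2) by linarith
  have th0: "0 < th" unfolding th_def using assms(1) pr by (simp add: zero_less_divide_iff)
  have thpi: "th < pi" unfolding th_def using lr pr by (simp add: divide_simps)
  have sth: "0 < sin th" using th0 thpi by (simp add: sin_gt_zero)
  have cth: "cos th < 1"
  proof -
    have "cos th < cos 0" using th0 thpi by (intro cos_monotone_0_pi) auto
    then show ?thesis by simp
  qed
  have cc2: "0 < 2 - cc" unfolding cc_def using cth by simp
  have trec: "\<And>k. tang r (k+1) = cc *\<^sub>R tang r k - tang r (k-1)"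
    using tang_rec[OF assms(4)] assms(5,6) unfolding cc_def th_def by blast
  define w where "w k = r (k+1) + r (k-1) - cc *\<^sub>R r k" for k
  have wc: "w k = w 0" for k
  proof (rule int_const)
    fix k :: int
    have "tang r (k+1) + tang r (k-1) - cc *\<^sub>R tang r k = 0" using trec[of k] by simp
    then show "w (k+1) = w k" unfolding w_def tang_def by (simp add: algebra_simps)
  qed
  define C0 where "C0 = (1 / (2 - cc)) *\<^sub>R w 0"
  define v where "v k = r k - C0" for k
  have C0e: "(2 - cc) *\<^sub>R C0 = w 0" unfolding C0_def using cc2 by simp
  have vrec: "v (k+1) = (2 * cos th) *\<^sub>R v k - v (k-1)" for k
  proof -
    have "r (k+1) + r (k-1) - cc *\<^sub>R r k = (2 - cc) *\<^sub>R C0" using wc[of k] C0e unfolding w_def by simp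
    then show ?thesis unfolding v_def cc_def[symmetric] by (simp add: prod_eq_iff algebra_simps)
  qed
  define P where "P = v 0"
  define Q where "Q = (1 / sin th) *\<^sub>R (v 1 - cos th *\<^sub>R v 0)"
  define U where "U y = cos y *\<^sub>R P + sin y *\<^sub>R Q" for y
  have rU: "r k = C0 + U (of_int k * th)" for k
    using closed_form[OF vrec, of k] sth unfolding U_def P_def Q_def v_def by (simp add: algebra_simps)
  have detU: "det2 (U b - U a) (U c - U a) = ff a b c * det2 P Q" for a b c
  proof -
    have "U b - U a = (cos b - cos a) *\<^sub>R P + (sin b - sin a) *\<^sub>R Q"
      "U c - U a = (cos c - cos a) *\<^sub>R P + (sin c - sin a) *\<^sub>R Q"
      unfolding U_def by (simp_all add: algebra_simps)
    then show ?thesis by (simp add: det2_lin ff_def)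
  qed
  have dPQ: "det2 P Q \<noteq> 0"
  proof
    assume h: "det2 P Q = 0"
    have "det2 (tang r (1 - 1)) (tang r 1) \<noteq> 0" using assms(4) unfolding nondegenerate_def by blast
    moreover have "tang r (1-1) = U th - U 0" "tang r 1 = U (2*th) - U th"
      unfolding tang_def rU by simp_all
    moreover have "det2 (U th - U 0) (U (2*th) - U th) = 0"
    proof -
      have "U th - U 0 = (cos th - cos 0) *\<^sub>R P + (sin th - sin 0) *\<^sub>R Q"
        "U (2*th) - U th = (cos (2*th) - cos th) *\<^sub>R P + (sin (2*th) - sin th) *\<^sub>R Q"
        unfolding U_def by (simp_all add: algebra_simps)
      then show ?thesis using h by (simp add: det2_lin)
    qed
    ultimately show False by simp
  qed
  have pth: "of_int p * th = 2 * pi * of_int l" unfolding th_def using pr by simp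
  have closed: "closed_with_period r p"
    unfolding closed_with_period_def
  proof (intro conjI allI impI)
    show "0 < p" using p5 by simp
  next
    fix k
    have "of_int (k + p) * th = of_int k * th + 2 * pi * of_int l"
      using pth by (simp add: distrib_right)
    then show "r (k + p) = r k" unfolding rU U_def by (simp add: U_period)
  next
    fix q assume q: "0 < q \<and> q < p"
    show "\<not> (\<forall>k. r (k + q) = r k)"
    proof
      assume "\<forall>k. r (k + q) = r k"
      then have "r (0 + q) = r 0" by blast
      then have "C0 + U (of_int q * th) = C0 + U (of_int 0 * th)" unfolding rU by simp
      then have "U (of_int q * th) = U 0" by simp
      then have e: "(cos (of_int q * th) - 1) *\<^sub>R P + sin (of_int q * th) *\<^sub>R Q = 0"
        unfolding U_def by (simp add: algebra_simps)
      have "det2 ((cos (of_int q * th) - 1) *\<^sub>R P + sin (of_int q * th) *\<^sub>R Q) Q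
         = (cos (of_int q * th) - 1) * det2 P Q" by (simp add: det2_def algebra_simps)
      moreover have "det2 0 z = 0" for z by (simp add: det2_def)
      ultimately have "cos (of_int q * th) = 1" using e dPQ by simp
      then obtain n :: int where "of_int q * th = of_int n * 2 * pi" by (auto simp: cos_one_2pi_int)
      then have "of_int q * (2 * of_int l * pi) = of_int n * 2 * pi * of_int p"
        unfolding th_def using pr by (simp add: field_simps)
      then have "real_of_int (q * l) = of_int (n * p)" by simp
      then have "q * l = n * p" by linarith
      then have "p dvd q * l" by simp
      moreover have "coprime p l" using assms(3) by (simp add: coprime_iff_gcd_eq_1)
      ultimately have "p dvd q" using coprime_dvd_mult_left_iff by blast
      then show False using zdvd_imp_le[of p q] q by linarith
    qed
  qed
  define k0 where "k0 = p div l + 1"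
  define x where "x = k0 * l - p"
  have pm: "p mod l \<noteq> 0"
  proof
    assume "p mod l = 0"
    then have "l dvd p" by auto
    then have "l dvd gcd p l" by simp
    then show False using assms(1,3) by (simp add: zdvd_imp_le)
  qed
  have xd: "x = l - p mod l" unfolding x_def k0_def
    using div_mult_mod_eq[of p l] by (simp add: algebra_simps)
  have mb: "0 \<le> p mod l" "p mod l < l" using assms(1) by simp_all
  have x0: "0 < x" "x < l" using pm xd mb by auto
  have k1: "1 \<le> k0" unfolding k0_def using p5 assms(1) by (simp add: pos_imp_zdiv_nonneg_iff)
  have k2: "k0 + 1 \<le> p"
  proof -
    have "p div l * l \<le> p" using div_mult_mod_eq[of p l] pos_mod_sign[of l p] assms(1) by linarith
    moreover have "p div l \<ge> 0" using p5 assms(1) by (simp add: pos_imp_zdiv_nonneg_iff)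
    moreover have "p div l * 2 \<le> p div l * l" using mult_left_mono[OF assms(1), of "p div l"] \<open>p div l \<ge> 0\<close> by simp
    ultimately have "2 * (p div l) \<le> p" by linarith
    then show ?thesis unfolding k0_def using p5 by linarith
  qed
  define a where "a = 2 * pi / of_int p"
  have a0: "0 < a" unfolding a_def using pr by simp
  have tha: "th = of_int l * a" unfolding th_def a_def by simp
  have pa: "of_int p * a = 2 * pi" unfolding a_def using pr by simp
  have k0th: "of_int k0 * th = of_int x * a + 2 * pi * of_int 1"
    unfolding tha using pa by (simp add: x_def algebra_simps)
  have k1th: "of_int (k0+1) * th = of_int (x + l) * a + 2 * pi * of_int 1"
    unfolding tha using pa by (simp add: x_def algebra_simps)
  define A where "A = r 0" define B where "B = r 1" define C where "C = r k0" define D where "D = r (k0+1)"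
  have AU: "A = C0 + U 0" unfolding A_def rU by simp
  have BU: "B = C0 + U (of_int l * a)" unfolding B_def rU tha by simp
  have CU: "C = C0 + U (of_int x * a)" unfolding C_def rU k0th U_def U_period by simp
  have DU: "D = C0 + U (of_int (x + l) * a)" unfolding D_def rU k1th U_def U_period by simp
  have lt: "of_int x * a < of_int l * a" "of_int l * a < of_int (x + l) * a"
    "of_int (x + l) * a < 2 * pi" "0 < of_int x * a"
  proof -
    show "of_int x * a < of_int l * a" using x0 a0 by simp
    show "of_int l * a < of_int (x + l) * a" using x0 a0 by simp
    have "x + l < p" using x0 assms(2) by linarith
    then have "of_int (x + l) * a < of_int p * a" using a0 by simp
    then show "of_int (x + l) * a < 2 * pi" using pa by simp
    show "0 < of_int x * a" using x0 a0 by simp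
  qed
  have f1: "0 < ff 0 (of_int x * a) (of_int l * a)" using lt by (intro ff_pos) auto
  have f2: "0 < ff 0 (of_int l * a) (of_int (x + l) * a)" using lt by (intro ff_pos) auto
  have f3: "0 < ff 0 (of_int x * a) (of_int (x + l) * a)" using lt by (intro ff_pos) auto
  have f4: "0 < ff (of_int x * a) (of_int l * a) (of_int (x + l) * a)" using lt by (intro ff_pos) auto
  have da: "det2 (C - A) (B - A) = ff 0 (of_int x * a) (of_int l * a) * det2 P Q"
    unfolding AU CU BU by (simp add: detU[symmetric])
  have db: "det2 (B - A) (D - A) = ff 0 (of_int l * a) (of_int (x + l) * a) * det2 P Q"
    unfolding AU DU BU by (simp add: detU[symmetric])
  have dc: "det2 (C - A) (D - A) = ff 0 (of_int x * a) (of_int (x + l) * a) * det2 P Q"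
    unfolding AU DU CU by (simp add: detU[symmetric])
  have dd: "det2 (B - C) (D - C) = ff (of_int x * a) (of_int l * a) (of_int (x + l) * a) * det2 P Q"
    unfolding CU DU BU by (simp add: detU[symmetric])
  have sq: "0 < det2 P Q * det2 P Q" using dPQ by (auto simp: zero_less_mult_iff linorder_neq_iff)
  obtain t s where ts: "0 < t" "t < 1" "0 < s" "s < 1"
     and eq: "(1 - t) *\<^sub>R A + t *\<^sub>R B = (1 - s) *\<^sub>R C + s *\<^sub>R D"
  proof -
    have "\<exists>t s. 0 < t \<and> t < 1 \<and> 0 < s \<and> s < 1 \<and>
     (1 - t) *\<^sub>R A + t *\<^sub>R B = (1 - s) *\<^sub>R C + s *\<^sub>R D"
      apply (rule crossing)
      unfolding da db dc dd
      using f1 f2 f3 f4 sq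
      by (simp_all add: mult.assoc mult.left_commute[of "det2 P Q"] mult_pos_pos)
    then show ?thesis using that by blast
  qed
  have i1: "interp r (of_int 0 + t) = (1 - t) *\<^sub>R A + t *\<^sub>R B"
    using interp_at[of t r 0] ts unfolding A_def B_def by simp
  have i2: "interp r (of_int k0 + s) = (1 - s) *\<^sub>R C + s *\<^sub>R D"
    using interp_at[of s r k0] ts unfolding C_def D_def by simp
  have notinj: "\<not> inj_on (interp r) {of_int 0 ..< of_int (0 + p)}"
  proof
    assume inj: "inj_on (interp r) {of_int 0 ..< of_int (0 + p)}"
    have m1: "of_int 0 + t \<in> {of_int 0 ..< real_of_int (0 + p)}" using ts p5 by simp
    have "real_of_int k0 + 1 \<le> of_int p" using k2 by linarith
    then have m2: "of_int k0 + s \<in> {of_int 0 ..< real_of_int (0 + p)}" using ts k1 by simp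
    have "of_int 0 + t = of_int k0 + s" using inj_onD[OF inj _ m1 m2] i1 i2 eq by simp
    moreover have "real_of_int 1 \<le> of_int k0" using k1 by linarith
    ultimately show False using ts by simp
  qed
  show ?thesis using closed notinj unfolding simple_closed_def by blast
qed

end
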